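(* Let $1\le s<t$. One can assign to each word $w\in W$ a pair of rational numbers $(a_w,b_w)\in\mathbb{Q}_{>2}^2$, the corresponding linear map $\ell_w:x\mapsto a_wx+b_w$, and a value $r_w\in(s,t)$ such that: (i) for all $v,w\in W$, if $v\le_W w$ and $v\ne w$, then $a_v<a_w$ and $b_v<b_w$ (and thus in particular $\ell_v<\ell_w$ on $(s,t)$); (ii) for all $v,w\in W$, if $v\not\le_W w$, then $\ell_v(r_v)>\ell_w(r_v)$ (and in particular $\ell_v\not\le\ell_w$ pointwise on $(s,t)$).
   Context: $W=\{0,1\}^*$ is the set of finite binary words; $w\le_W w'$ iff $w'$ is a prefix (initial segment) of $w$. $\mathbb{Q}_{>2}$ denotes the rational numbers greater than $2$. *)

theory Defs
  imports Complex_Main "HOL-Library.Sublist"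
begin

definition leW :: "bool list \<Rightarrow> bool list \<Rightarrow> bool" where
  "leW v w \<longleftrightarrow> prefix w v"

end

theory Submission
  imports Defs
begin

fun lam :: "rat \<Rightarrow> rat \<Rightarrow> nat \<Rightarrow> rat" where
  "lam L c 0 = L" | "lam L c (Suc i) = c * (lam L c i)^2"

lemma lam_props:
  assumes "L > 0" "c > 0" "L*c \<le> 1/8"
  shows "0 < lam L c i \<and> lam L c i \<le> L \<and> lam L c (Suc i) \<le> lam L c i / 8"
proof (induction i)
  case 0
  have "c * L^2 = (L*c) * L" by (simp add: power2_eq_square)
  also have "\<dots> \<le> 1/8 * L" using assms by (intro mult_right_mono) auto
  finally show ?case using assms by simp
next
  case (Suc i)
  let ?x = "lam L c i"
  have pos: "0 < lam L c (Suc i)" using Suc assms by simp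
  have le: "lam L c (Suc i) \<le> L" using Suc by linarith
  have "c * (lam L c (Suc i))^2 = (c * lam L c (Suc i)) * lam L c (Suc i)" by (simp add: power2_eq_square)
  also have "\<dots> \<le> (c*L) * lam L c (Suc i)" using pos le assms by (intro mult_right_mono) auto
  also have "\<dots> \<le> 1/8 * lam L c (Suc i)" using pos assms by (intro mult_right_mono) (auto simp: mult.commute)
  finally show ?case using pos le by simp
qed

definition T :: "rat \<Rightarrow> rat \<Rightarrow> nat \<Rightarrow> nat \<Rightarrow> rat" where
  "T L c k n = (\<Sum>i<n. lam L c (k+i))"

lemma T_Suc: "T L c k (Suc n) = lam L c k + T L c (Suc k) n"
  unfolding T_def by (subst sum.lessThan_Suc_shift) (simp del: lam.simps)

lemma T_add: "T L c k (m+n) = T L c k m + T L c (k+m) n"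
  by (induction n) (auto simp: T_def add.assoc)

fun S :: "rat \<Rightarrow> rat \<Rightarrow> nat \<Rightarrow> bool list \<Rightarrow> rat" where
  "S L c k [] = 0" | "S L c k (x#xs) = lam L c k * (if x then 2 else 1) + S L c (Suc k) xs"

lemma S_append: "S L c k (xs@ys) = S L c k xs + S L c (k + length xs) ys"
  by (induction xs arbitrary: k) auto

context
  fixes L c :: rat
  assumes L: "L > 0" and c: "c > 0" and Lc: "L*c \<le> 1/8"
begin

lemma lam_pos: "0 < lam L c i" and lam_le: "lam L c i \<le> L"
  and lam_half: "lam L c (Suc i) \<le> lam L c i / 8"
  using lam_props[OF L c Lc, of i] by auto

lemma T_nonneg: "0 \<le> T L c k n"
  unfolding T_def using lam_pos by (simp add: sum_nonneg less_imp_le)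

lemma T_bound: "T L c k n \<le> 2 * (lam L c k - lam L c (k+n))"
proof (induction n)
  case 0 show ?case by (simp add: T_def)
next
  case (Suc n)
  have "T L c k (Suc n) = T L c k n + lam L c (k+n)" by (simp add: T_def)
  moreover have "lam L c (Suc (k+n)) \<le> lam L c (k+n) / 8" by (rule lam_half)
  ultimately show ?case using Suc lam_pos[of "k+n"] by simp
qed

lemma T_bound2: "T L c k n < 2 * lam L c k"
proof -
  have "T L c k n \<le> 2 * (lam L c k - lam L c (k+n))" by (rule T_bound)
  moreover have "0 < lam L c (k+n)" by (rule lam_pos)
  ultimately show ?thesis by (simp add: algebra_simps)
qed


lemma S_bounds: "T L c k (length xs) \<le> S L c k xs \<and> S L c k xs \<le> 2 * T L c k (length xs)"
proof (induction xs arbitrary: k)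
  case Nil show ?case by (simp add: T_def)
next
  case (Cons x xs)
  show ?case using Cons[of "Suc k"] lam_pos[of k] by (simp add: T_Suc)
qed


end

theorem lemma25:
  fixes s t :: real
  assumes "1 \<le> s" and "s < t"
  shows "\<exists>(a :: bool list \<Rightarrow> rat) (b :: bool list \<Rightarrow> rat) (r :: bool list \<Rightarrow> real).
           (\<forall>w. a w > 2 \<and> b w > 2 \<and> s < r w \<and> r w < t) \<and>
           (\<forall>v w. leW v w \<and> v \<noteq> w \<longrightarrow> a v < a w \<and> b v < b w) \<and>
           (\<forall>v w. \<not> leW v w \<longrightarrow>
              of_rat (a v) * r v + of_rat (b v) > of_rat (a w) * r v + of_rat (b w))"
proof -
  obtain lo :: rat where lo: "s < of_rat lo" "of_rat lo < t" using of_rat_dense[OF assms(2)] by blast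
  obtain r0 :: rat where r0: "(of_rat lo :: real) < of_rat r0" "of_rat r0 < t" using of_rat_dense[OF lo(2)] by blast
  have lor0: "lo < r0" using r0(1) by (simp add: of_rat_less)
  have lo1: "1 < lo" using lo(1) assms(1) by (metis of_rat_1 of_rat_less order_le_less_trans)
  define K :: rat where "K = 4*r0+1"
  define c :: rat where "c = 1/(16*K)"
  define L :: rat where "L = (r0 - lo)/4"
  define C :: rat where "C = 3 + r0^2 + 2*K*L"
  have K: "K > 0" using lor0 lo1 by (simp add: K_def)
  have Lp: "L > 0" using lor0 by (simp add: L_def)
  have cp: "c > 0" using K by (simp add: c_def)
  have Lc: "L*c \<le> 1/8" using K lor0 lo1 by (simp add: c_def L_def K_def field_simps)
  note lp = lam_pos[OF Lp cp Lc] and lle = lam_le[OF Lp cp Lc] and lh = lam_half[OF Lp cp Lc]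
    and Tn = T_nonneg[OF Lp cp Lc] and Tb = T_bound2[OF Lp cp Lc] and Sb = S_bounds[OF Lp cp Lc]
    and Sa = S_append
  define R where "R w = r0 - S L c 0 w" for w
  define D where "D n = K * T L c 0 n" for n
  define a where "a w = 2 * R w" for w
  define b where "b w = C - (R w)^2 - D (length w)" for w
  have Rle: "R w \<le> r0" for w using Sb[of 0 w] Tn[of 0 "length w"] by (simp add: R_def)
  have Rgt: "lo < R w" for w
  proof -
    have "S L c 0 w \<le> 2 * T L c 0 (length w)" using Sb by blast
    also have "\<dots> < 4 * L" using Tb[of 0 "length w"] by simp
    also have "\<dots> = r0 - lo" by (simp add: L_def)
    finally show ?thesis by (simp add: R_def)
  qed
  have Dle: "D n \<le> 2*K*L" for n using Tb[of 0 n] K by (simp add: D_def)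
  have Dge: "0 \<le> D n" for n using Tn[of 0 n] K by (simp add: D_def)
  have key: "a v * R v + b v - (a w * R v + b w) = (R v - R w)^2 + D (length w) - D (length v)" for v w
    by (simp add: a_def b_def power2_eq_square algebra_simps)
  have part1: "a w > 2 \<and> b w > 2 \<and> s < of_rat (R w) \<and> of_rat (R w) < t" for w
  proof -
    have "R w > 1" using Rgt[of w] lo1 by simp
    moreover have "(R w)^2 \<le> r0^2" using Rle[of w] Rgt[of w] lo1 by (intro power_mono) auto
    moreover have "s < of_rat (R w)" using lo(1) Rgt[of w] by (meson of_rat_less order_less_trans)
    moreover have "of_rat (R w) < t" using r0(2) Rle[of w] by (meson of_rat_less_eq order_le_less_trans)
    ultimately show ?thesis using Dle[of "length w"] by (simp add: a_def b_def C_def)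
  qed
  have part2: "a v < a w \<and> b v < b w" if "leW v w" "v \<noteq> w" for v w
  proof -
    from that obtain z where v: "v = w @ z" and z: "z \<noteq> []" by (auto simp: leW_def prefix_def)
    let ?m = "length w" and ?n = "length z"
    have Sv: "S L c 0 v = S L c 0 w + S L c ?m z" using Sa[of L c 0 w z] v by simp
    have Tz: "T L c ?m ?n > 0" using z lp[of ?m] Tn[of "Suc ?m" "?n - 1"]
      by (cases z) (auto simp: T_Suc)
    have Sz1: "T L c ?m ?n \<le> S L c ?m z" and Sz2: "S L c ?m z \<le> 2 * T L c ?m ?n" using Sb by auto
    have RR: "R w - R v = S L c ?m z" by (simp add: R_def Sv)
    have Dd: "D (length v) - D (length w) = K * T L c ?m ?n" by (simp add: D_def v T_add algebra_simps)
    have "(R w)^2 - (R v)^2 = (R w - R v) * (R w + R v)" by (simp add: power2_eq_square algebra_simps)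
    also have "\<dots> \<le> (R w - R v) * (2*r0)" using RR Sz1 Tz Rle[of v] Rle[of w] by (intro mult_left_mono) auto
    also have "\<dots> \<le> (2 * T L c ?m ?n) * (2*r0)" using RR Sz2 lor0 lo1 by (intro mult_right_mono) auto
    also have "\<dots> < K * T L c ?m ?n" using Tz by (simp add: K_def algebra_simps)
    finally have "(R w)^2 - (R v)^2 < D (length v) - D (length w)" using Dd by simp
    moreover have "R v < R w" using RR Sz1 Tz by simp
    ultimately show ?thesis by (simp add: a_def b_def)
  qed
  have part3: "a v * R v + b v > a w * R v + b w" if "\<not> leW v w" for v w
  proof (cases "prefix v w")
    case True
    then obtain z where w: "w = v @ z" by (auto simp: prefix_def)
    have z: "z \<noteq> []" using that w by (auto simp: leW_def)
    let ?m = "length v" and ?n = "length z"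
    have Tz: "T L c ?m ?n > 0" using z lp[of ?m] Tn[of "Suc ?m" "?n - 1"]
      by (cases z) (auto simp: T_Suc)
    have "D (length w) - D (length v) = K * T L c ?m ?n" by (simp add: D_def w T_add algebra_simps)
    then have "D (length w) - D (length v) > 0" using K Tz by simp
    moreover have "0 \<le> (R v - R w)^2" by simp
    ultimately have "a v * R v + b v - (a w * R v + b w) > 0" unfolding key by linarith
    then show ?thesis by simp
  next
    case False
    then have "v \<parallel> w" using that by (auto simp: leW_def)
    from parallel_decomp[OF this] obtain u x xs y ys where
      xy: "x \<noteq> y" and v: "v = u @ x # xs" and w: "w = u @ y # ys" by blast
    let ?j = "length u"
    let ?l = "lam L c ?j"
    have Sv: "S L c 0 v = S L c 0 u + ?l * (if x then 2 else 1) + S L c (Suc ?j) xs"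
      using Sa[of L c 0 u "x#xs"] v by simp
    have Sw: "S L c 0 w = S L c 0 u + ?l * (if y then 2 else 1) + S L c (Suc ?j) ys"
      using Sa[of L c 0 u "y#ys"] w by simp
    have l1: "lam L c (Suc ?j) \<le> ?l / 8" by (rule lh)
    have l2: "lam L c (Suc ?j) = c * ?l^2" by simp
    have bx: "0 \<le> S L c (Suc ?j) xs \<and> S L c (Suc ?j) xs \<le> ?l / 2"
      using Sb[of "Suc ?j" xs] Tn[of "Suc ?j" "length xs"] Tb[of "Suc ?j" "length xs"] l1 by auto
    have by': "0 \<le> S L c (Suc ?j) ys \<and> S L c (Suc ?j) ys \<le> ?l / 2"
      using Sb[of "Suc ?j" ys] Tn[of "Suc ?j" "length ys"] Tb[of "Suc ?j" "length ys"] l1 by auto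
    have gap: "\<bar>R v - R w\<bar> \<ge> ?l / 2"
      using xy bx by' lp[of ?j] unfolding R_def Sv Sw by (cases x; cases y) auto
    have g2: "(R v - R w)^2 \<ge> (?l/2)^2"
    proof -
      have "\<bar>?l/2\<bar> \<le> \<bar>R v - R w\<bar>" using gap lp[of ?j] by simp
      then show ?thesis by (simp only: abs_le_square_iff)
    qed
    have Tv: "T L c 0 (length v) = T L c 0 ?j + ?l + T L c (Suc ?j) (length xs)"
    proof -
      have "length v = ?j + Suc (length xs)" using v by simp
      then show ?thesis by (simp only: T_add T_Suc add_0 add.assoc)
    qed
    have Tw: "T L c 0 (length w) = T L c 0 ?j + ?l + T L c (Suc ?j) (length ys)"
    proof -
      have "length w = ?j + Suc (length ys)" using w by simp
      then show ?thesis by (simp only: T_add T_Suc add_0 add.assoc)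
    qed
    have "D (length v) - D (length w) \<le> K * T L c (Suc ?j) (length xs)"
      using Tn[of "Suc ?j" "length ys"] K unfolding D_def Tv Tw by (simp add: algebra_simps)
    also have "\<dots> \<le> K * (2 * (c * ?l^2))" using Tb[of "Suc ?j" "length xs"] K l2
      by (intro mult_left_mono) auto
    also have "\<dots> = ?l^2 / 8" using K by (simp add: c_def)
    also have "\<dots> < (?l/2)^2" using lp[of ?j] by (simp add: power2_eq_square)
    finally have "D (length v) - D (length w) < (R v - R w)^2" using g2 by simp
    then have "a v * R v + b v - (a w * R v + b w) > 0" unfolding key by simp
    then show ?thesis by simp
  qed
  have p3: "\<forall>v w. \<not> leW v w \<longrightarrow> of_rat (a v) * of_rat (R v) + of_rat (b v) > of_rat (a w) * of_rat (R v) + (of_rat (b w) :: real)"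
  proof (intro allI impI)
    fix v w assume "\<not> leW v w"
    then have "of_rat (a w * R v + b w) < (of_rat (a v * R v + b v) :: real)"
      using part3 of_rat_less by blast
    then show "of_rat (a v) * of_rat (R v) + of_rat (b v) > of_rat (a w) * of_rat (R v) + (of_rat (b w) :: real)"
      by (simp add: of_rat_add of_rat_mult)
  qed
  show ?thesis
    apply (rule exI[of _ a], rule exI[of _ b], rule exI[of _ "\<lambda>w. of_rat (R w)"])
    using part1 part2 p3 by blast
qed

end
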